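(* Let $n\ge3$, $k\ge0$, let $m\ge2$, and let $C=\{(x_\alpha,y_\alpha):\alpha\in[m]\}$ be a strict alternating cycle in $\mathrm{Inc}(A,B)$ for the crown $S_n^k$. Then $mn\le 2(n+k)$.
   Context: For integers $n\ge3$, $k\ge0$, the crown $S_n^k$ is the poset with ground set $A\cup B$, $A=\{a_1,\dots,a_{n+k}\}$, $B=\{b_1,\dots,b_{n+k}\}$, indices cyclic modulo $n+k$; elements of $A$ are pairwise incomparable, as are elements of $B$, and $a_i$ is incomparable to $b_j$ when $j\in\{i,\dots,i+k\}$ (mod $n+k$), while $a_i<b_j$ otherwise. $\mathrm{Inc}(A,B)$ is the set of pairs $(a,b)\in A\times B$ with $a$ incomparable to $b$. An indexed set $\{(x_\alpha,y_\alpha):\alpha\in[m]\}$ of incomparable pairs is an alternating cycle of size $m$ if $x_\alpha\le y_{\alpha-1}$ for all $\alpha\in[m]$ (subscripts cyclic modulo $m$, so $x_1\le y_m$); it is strict if, for all $\alpha,\beta\in[m]$, $x_\alpha\le y_\beta$ holds if and only if $\beta=\alpha-1$. Here $[m]=\{1,\dots,m\}$. *)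

theory Defs
  imports Main
begin

datatype crown_elt = CA nat | CB nat

definition crown_A :: "nat \<Rightarrow> nat \<Rightarrow> crown_elt set" where
  "crown_A n k = CA ` {..<n+k}"

definition crown_B :: "nat \<Rightarrow> nat \<Rightarrow> crown_elt set" where
  "crown_B n k = CB ` {..<n+k}"

text \<open>a_i incomparable to b_j iff j is in {i,...,i+k} mod (n+k), i.e. (j - i) mod (n+k) <= k.\<close>
definition crown_le :: "nat \<Rightarrow> nat \<Rightarrow> crown_elt \<Rightarrow> crown_elt \<Rightarrow> bool" where
  "crown_le n k p q \<longleftrightarrow> p = q \<or>
     (\<exists>i j. p = CA i \<and> q = CB j \<and> i < n + k \<and> j < n + k \<and>
            \<not> ((int j - int i) mod int (n + k) \<le> int k))"

definition incomparable :: "('a \<Rightarrow> 'a \<Rightarrow> bool) \<Rightarrow> 'a \<Rightarrow> 'a \<Rightarrow> bool" where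
  "incomparable le x y \<longleftrightarrow> \<not> le x y \<and> \<not> le y x"

definition crown_Inc :: "nat \<Rightarrow> nat \<Rightarrow> (crown_elt \<times> crown_elt) set" where
  "crown_Inc n k = {(a, b). a \<in> crown_A n k \<and> b \<in> crown_B n k \<and> incomparable (crown_le n k) a b}"

definition cprev :: "nat \<Rightarrow> nat \<Rightarrow> nat" where
  "cprev m \<alpha> = (if \<alpha> = 1 then m else \<alpha> - 1)"

definition alternating_cycle ::
  "('a \<Rightarrow> 'a \<Rightarrow> bool) \<Rightarrow> ('a \<times> 'a) set \<Rightarrow> nat \<Rightarrow> (nat \<Rightarrow> 'a) \<Rightarrow> (nat \<Rightarrow> 'a) \<Rightarrow> bool" where
  "alternating_cycle le P m x y \<longleftrightarrow>
     (\<forall>\<alpha>\<in>{1..m}. (x \<alpha>, y \<alpha>) \<in> P \<and> incomparable le (x \<alpha>) (y \<alpha>) \<and> le (x \<alpha>) (y (cprev m \<alpha>)))"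

definition strict_alternating_cycle ::
  "('a \<Rightarrow> 'a \<Rightarrow> bool) \<Rightarrow> ('a \<times> 'a) set \<Rightarrow> nat \<Rightarrow> (nat \<Rightarrow> 'a) \<Rightarrow> (nat \<Rightarrow> 'a) \<Rightarrow> bool" where
  "strict_alternating_cycle le P m x y \<longleftrightarrow>
     alternating_cycle le P m x y \<and>
     (\<forall>\<alpha>\<in>{1..m}. \<forall>\<beta>\<in>{1..m}. le (x \<alpha>) (y \<beta>) \<longleftrightarrow> \<beta> = cprev m \<alpha>)"

end

theory Submission
  imports Defs
begin

lemma cw_lem:
  fixes k N z i p q :: int
  assumes "0 \<le> k" "k < N" "(z - i) mod N \<ge> k" "(p - i) mod N > (z - i) mod N" "(q - i) mod N \<le> k"
  shows "(p - z - 1) mod N < (q - z - 1) mod N"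
proof -
  define t where "t = (p - i) mod N"
  define s where "s = (z - i) mod N"
  define u where "u = (q - i) mod N"
  have N0: "N > 0" using assms by linarith
  have tr: "0 \<le> t" "t < N" "0 \<le> s" "s < N" "0 \<le> u" "u < N" using N0 by (simp_all add: t_def s_def u_def)
  note tr = tr[unfolded t_def s_def u_def]
  have e1: "(p - z - 1) mod N = (t - s - 1) mod N"
  proof -
    have "(t - s - 1) mod N = (t - 1 - s) mod N" by (simp add: algebra_simps)
    also have "\<dots> = ((p - i) mod N - 1 - (z - i)) mod N" unfolding s_def t_def by (rule mod_diff_right_eq)
    also have "\<dots> = ((p - i) mod N - (z - i + 1)) mod N" by (simp add: algebra_simps)
    also have "\<dots> = ((p - i) - (z - i + 1)) mod N" unfolding t_def by (rule mod_diff_left_eq)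
    finally show ?thesis by (simp add: algebra_simps)
  qed
  have e2: "(q - z - 1) mod N = (u - s - 1) mod N"
  proof -
    have "(u - s - 1) mod N = (u - 1 - s) mod N" by (simp add: algebra_simps)
    also have "\<dots> = ((q - i) mod N - 1 - (z - i)) mod N" unfolding s_def u_def by (rule mod_diff_right_eq)
    also have "\<dots> = ((q - i) mod N - (z - i + 1)) mod N" by (simp add: algebra_simps)
    also have "\<dots> = ((q - i) - (z - i + 1)) mod N" by (rule mod_diff_left_eq)
    finally show ?thesis by (simp add: algebra_simps)
  qed
  have "(t - s - 1) mod N = t - s - 1" by (rule mod_pos_pos_trivial) (use assms tr t_def s_def u_def in linarith)+
  moreover have "(u - s - 1) mod N = u - s - 1 + N"
  proof -
    have "(u - s - 1) mod N = (u - s - 1 + N) mod N" by simp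
    also have "\<dots> = u - s - 1 + N" by (rule mod_pos_pos_trivial) (use assms tr t_def s_def u_def in linarith)+
    finally show ?thesis .
  qed
  ultimately show ?thesis using e1 e2 tr assms unfolding t_def s_def u_def by linarith
qed

lemma ccw_lem:
  fixes k N z i p q :: int
  assumes "0 \<le> k" "k < N" "(z - i) mod N \<ge> k" "(p - i) mod N > k" "(p - i) mod N \<le> (z - i) mod N" "(q - i) mod N \<le> k"
  shows "(z - p) mod N < (z - q) mod N"
proof -
  define t where "t = (p - i) mod N"
  define s where "s = (z - i) mod N"
  define u where "u = (q - i) mod N"
  have N0: "N > 0" using assms by linarith
  have tr: "0 \<le> t" "t < N" "0 \<le> s" "s < N" "0 \<le> u" "u < N" using N0 by (simp_all add: t_def s_def u_def)
  note tr = tr[unfolded t_def s_def u_def]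
  have e1: "(z - p) mod N = (s - t) mod N"
    unfolding t_def s_def by (simp add: mod_diff_eq)
  have e2: "(z - q) mod N = (s - u) mod N"
    unfolding u_def s_def by (simp add: mod_diff_eq)
  have "(s - t) mod N = s - t" by (rule mod_pos_pos_trivial) (use assms tr t_def s_def u_def in linarith)+
  moreover have "(s - u) mod N = s - u" by (rule mod_pos_pos_trivial) (use assms tr t_def s_def u_def in linarith)+
  ultimately show ?thesis using e1 e2 tr assms unfolding t_def s_def u_def by linarith
qed

lemma cprev_inj:
  assumes "a \<in> {1..m}" "b \<in> {1..m}" "cprev m a = cprev m b" shows "a = b"
  using assms by (auto simp: cprev_def split: if_splits)

lemma cprev_in: assumes "a \<in> {1..m}" shows "cprev m a \<in> {1..m}"
  using assms by (auto simp: cprev_def)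

lemma card_window:
  fixes N k i :: nat
  assumes "k \<le> N"
  shows "N - k \<le> card {z\<in>{0..<N}. int k \<le> (int z - int i) mod int N}"
proof -
  let ?f = "\<lambda>w. (w + i) mod N"
  have bk: "(int ((w + i) mod N) - int i) mod int N = int w" if "w < N" for w
  proof -
    have "(int ((w + i) mod N) - int i) mod int N = (int (w + i) mod int N - int i) mod int N"
      by (simp add: zmod_int)
    also have "\<dots> = (int (w + i) - int i) mod int N" by (rule mod_diff_left_eq)
    also have "\<dots> = int w" using that by simp
    finally show ?thesis .
  qed
  have inj: "inj_on ?f {k..<N}"
  proof
    fix w w' assume w: "w \<in> {k..<N}" "w' \<in> {k..<N}" and e: "?f w = ?f w'"
    then have "(int ((w + i) mod N) - int i) mod int N = (int ((w' + i) mod N) - int i) mod int N" by simp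
    with w show "w = w'" using bk[of w] bk[of w'] by simp
  qed
  have sub: "?f ` {k..<N} \<subseteq> {z\<in>{0..<N}. int k \<le> (int z - int i) mod int N}"
  proof
    fix z assume "z \<in> ?f ` {k..<N}"
    then obtain w where w: "w \<in> {k..<N}" "z = (w + i) mod N" by auto
    have "(int z - int i) mod int N = int w" using w bk[of w] by simp
    then show "z \<in> {z\<in>{0..<N}. int k \<le> (int z - int i) mod int N}" using w by auto
  qed
  have "N - k = card (?f ` {k..<N})" using card_image[OF inj] by simp
  also have "\<dots> \<le> card {z\<in>{0..<N}. int k \<le> (int z - int i) mod int N}"
    by (rule card_mono[OF _ sub]) simp
  finally show ?thesis .
qed

theorem lemma4p2:
  fixes n k m :: nat and x y :: "nat \<Rightarrow> crown_elt"
  assumes "n \<ge> 3" and "m \<ge> 2"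
    and "strict_alternating_cycle (crown_le n k) (crown_Inc n k) m x y"
  shows "m * n \<le> 2 * (n + k)"
proof -
  define N where "N = n + k"
  define NI where "NI = int N"
  define ia where "ia = (\<lambda>a. case x a of CA u \<Rightarrow> u | CB u \<Rightarrow> 0)"
  define jb where "jb = (\<lambda>a. case y a of CB u \<Rightarrow> u | CA u \<Rightarrow> 0)"
  define I where "I = (\<lambda>a. int (ia a))"
  define J where "J = (\<lambda>a. int (jb a))"
  have ac: "alternating_cycle (crown_le n k) (crown_Inc n k) m x y"
    and st: "\<And>a b. a \<in> {1..m} \<Longrightarrow> b \<in> {1..m} \<Longrightarrow> crown_le n k (x a) (y b) \<longleftrightarrow> b = cprev m a"
    using assms(3) unfolding strict_alternating_cycle_def by auto
  have xa: "x a = CA (ia a) \<and> ia a < N" if "a \<in> {1..m}" for a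
  proof -
    have "x a \<in> CA ` {..<N}"
      using ac that unfolding alternating_cycle_def crown_Inc_def crown_A_def N_def by auto
    then show ?thesis unfolding ia_def by auto
  qed
  have yb: "y a = CB (jb a) \<and> jb a < N" if "a \<in> {1..m}" for a
  proof -
    have "y a \<in> CB ` {..<N}"
      using ac that unfolding alternating_cycle_def crown_Inc_def crown_B_def N_def by auto
    then show ?thesis unfolding jb_def by auto
  qed
  have le_iff: "crown_le n k (x a) (y b) \<longleftrightarrow> \<not> ((J b - I a) mod NI \<le> int k)"
    if "a \<in> {1..m}" "b \<in> {1..m}" for a b
    using xa[OF that(1)] yb[OF that(2)] unfolding crown_le_def I_def J_def NI_def N_def by auto
  have H1: "(J (cprev m a) - I a) mod NI > int k" if "a \<in> {1..m}" for a
    using st[OF that cprev_in[OF that]] le_iff[OF that cprev_in[OF that]] by simp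
  have H2: "(J b - I a) mod NI \<le> int k" if "a \<in> {1..m}" "b \<in> {1..m}" "b \<noteq> cprev m a" for a b
    using st[OF that(1,2)] le_iff[OF that(1,2)] that(3) by simp
  have kN: "0 \<le> int k" "int k < NI" using assms(1) unfolding NI_def N_def by auto
  define A where "A = (\<lambda>z::nat. {a\<in>{1..m}. int k \<le> (int z - I a) mod NI})"
  have cardA: "card (A z) \<le> 2" for z
  proof -
    define Z where "Z = int z"
    define Acw where "Acw = {a\<in>A z. (J (cprev m a) - I a) mod NI > (Z - I a) mod NI}"
    define Accw where "Accw = {a\<in>A z. (J (cprev m a) - I a) mod NI \<le> (Z - I a) mod NI}"
    have fin: "finite Acw" "finite Accw" unfolding Acw_def Accw_def A_def by auto
    have un: "A z = Acw \<union> Accw" unfolding Acw_def Accw_def by auto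
    have c1: "card Acw \<le> 1"
    proof -
      have "\<forall>a\<in>Acw. \<forall>b\<in>Acw. a = b"
      proof (intro ballI, rule ccontr)
        fix a b assume a: "a \<in> Acw" and b: "b \<in> Acw" and ne: "a \<noteq> b"
        have am: "a \<in> {1..m}" and bm: "b \<in> {1..m}" using a b unfolding Acw_def A_def by auto
        have cne: "cprev m a \<noteq> cprev m b" using cprev_inj[OF am bm] ne by auto
        have "(J (cprev m a) - Z - 1) mod NI < (J (cprev m b) - Z - 1) mod NI"
          apply (rule cw_lem[OF kN, where i = "I a"])
          using a H2[OF am cprev_in[OF bm]] cne unfolding Acw_def A_def Z_def by auto
        moreover have "(J (cprev m b) - Z - 1) mod NI < (J (cprev m a) - Z - 1) mod NI"
          apply (rule cw_lem[OF kN, where i = "I b"])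
          using b H2[OF bm cprev_in[OF am]] cne unfolding Acw_def A_def Z_def by auto
        ultimately show False by simp
      qed
      then show ?thesis using card_le_Suc0_iff_eq[OF fin(1)] by simp
    qed
    have c2: "card Accw \<le> 1"
    proof -
      have "\<forall>a\<in>Accw. \<forall>b\<in>Accw. a = b"
      proof (intro ballI, rule ccontr)
        fix a b assume a: "a \<in> Accw" and b: "b \<in> Accw" and ne: "a \<noteq> b"
        have am: "a \<in> {1..m}" and bm: "b \<in> {1..m}" using a b unfolding Accw_def A_def by auto
        have cne: "cprev m a \<noteq> cprev m b" using cprev_inj[OF am bm] ne by auto
        have "(Z - J (cprev m a)) mod NI < (Z - J (cprev m b)) mod NI"
          apply (rule ccw_lem[OF kN, where i = "I a"])
          using a H1[OF am] H2[OF am cprev_in[OF bm]] cne unfolding Accw_def A_def Z_def by auto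
        moreover have "(Z - J (cprev m b)) mod NI < (Z - J (cprev m a)) mod NI"
          apply (rule ccw_lem[OF kN, where i = "I b"])
          using b H1[OF bm] H2[OF bm cprev_in[OF am]] cne unfolding Accw_def A_def Z_def by auto
        ultimately show False by simp
      qed
      then show ?thesis using card_le_Suc0_iff_eq[OF fin(2)] by simp
    qed
    have "card (A z) \<le> card Acw + card Accw" unfolding un by (rule card_Un_le)
    then show ?thesis using c1 c2 by simp
  qed
  define P where "P = (\<lambda>a z. int k \<le> (int z - I a) mod NI)"
  have "m * n = (\<Sum>a\<in>{1..m}. N - k)" unfolding N_def by simp
  also have "\<dots> \<le> (\<Sum>a\<in>{1..m}. card {z\<in>{0..<N}. P a z})"
    apply (rule sum_mono)
    unfolding P_def I_def NI_def using card_window[of k N] N_def by simp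
  also have "\<dots> = (\<Sum>a\<in>{1..m}. \<Sum>z\<in>{0..<N}. if P a z then 1 else 0)"
    apply (simp add: sum.If_cases)
    apply (intro sum.cong refl arg_cong[where f=card])
    by auto
  also have "\<dots> = (\<Sum>z\<in>{0..<N}. \<Sum>a\<in>{1..m}. if P a z then 1 else 0)"
    by (rule sum.swap)
  also have "\<dots> = (\<Sum>z\<in>{0..<N}. card (A z))"
    unfolding A_def P_def
    apply (simp add: sum.If_cases)
    apply (intro sum.cong refl arg_cong[where f=card])
    by auto
  also have "\<dots> \<le> (\<Sum>z\<in>{0..<N}. 2)" by (rule sum_mono) (rule cardA)
  also have "\<dots> = 2 * (n + k)" unfolding N_def by simp
  finally show ?thesis .
qed

end
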